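(* For every finite alphabet $\Sigma$, every word $x\in\Sigma^*$ and every $\varepsilon>0$, there is a 3-state AfA that accepts $x$ with probability $1$ and accepts every word $z\in\Sigma^*$ with $z\neq x$ with probability at most $\varepsilon$.
   Context: An $n$-state affine finite automaton (AfA) over $\Sigma$ consists of real $n\times n$ matrices $A_\sigma$ for $\sigma\in\Sigma\cup\{\$\}$ ($\$$ a right end-marker), each of whose columns sums to $1$; an initial vector $v_0\in\mathbb{R}^n$ with entries summing to $1$; and a set $E_a$ of accepting states. On input $w=w_1\cdots w_k$ the final vector is $v_f=A_\$A_{w_k}\cdots A_{w_1}v_0$, and $w$ is accepted with probability $\sum_{j\in E_a}|v_f[j]|\big/\sum_{j=1}^n|v_f[j]|$. *)

theory Defs
  imports "HOL-Analysis.Analysis"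
begin

record ('a, 'n) afa =
  trans :: "'a \<Rightarrow> real ^ 'n ^ 'n"
  endmark :: "real ^ 'n ^ 'n"
  init :: "real ^ 'n"
  acc :: "'n set"

definition col_stochastic :: "real ^ 'n ^ 'n \<Rightarrow> bool" where
  "col_stochastic A \<longleftrightarrow> (\<forall>j. (\<Sum>i\<in>UNIV. A $ i $ j) = 1)"

definition is_afa :: "('a, 'n::finite) afa \<Rightarrow> bool" where
  "is_afa M \<longleftrightarrow> (\<forall>\<sigma>. col_stochastic (trans M \<sigma>)) \<and> col_stochastic (endmark M)
     \<and> (\<Sum>i\<in>UNIV. init M $ i) = 1"

definition final_vec :: "('a, 'n::finite) afa \<Rightarrow> 'a list \<Rightarrow> real ^ 'n" where
  "final_vec M w = endmark M *v foldl (\<lambda>v \<sigma>. trans M \<sigma> *v v) (init M) w"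

definition accept_prob :: "('a, 'n::finite) afa \<Rightarrow> 'a list \<Rightarrow> real" where
  "accept_prob M w =
     (\<Sum>j\<in>acc M. \<bar>final_vec M w $ j\<bar>) / (\<Sum>j\<in>UNIV. \<bar>final_vec M w $ j\<bar>)"

end

theory Submission
  imports Defs
begin

definition encr :: "real \<Rightarrow> ('a \<Rightarrow> real) \<Rightarrow> real \<Rightarrow> 'a list \<Rightarrow> real" where
  "encr B d r w = foldl (\<lambda>n s. B * n + d s) r w"

definition Tm :: "real \<Rightarrow> ('a \<Rightarrow> real) \<Rightarrow> 'a \<Rightarrow> real^3^3" where
  "Tm B d s = (\<chi> i j. if j = 1 then (if i = 1 then 1 - d s else if i = 2 then d s else 0)
      else if j = 2 then (if i = 1 then 1 - B - d s else if i = 2 then B + d s else 0)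
      else (if i = 1 then 1 else 0))"

lemma three_distinct: "(1::3) \<noteq> 2" "(1::3) \<noteq> 3" "(2::3) \<noteq> 3" "(2::3) \<noteq> 1" "(3::3) \<noteq> 1" "(3::3) \<noteq> 2"
  by simp_all

lemma Tm_step:
  "Tm B d s *v (\<chi> i. if i = 1 then 1 - r else if i = 2 then r else 0)
   = (\<chi> i. if i = 1 then 1 - (B*r + d s) else if i = 2 then B*r + d s else 0)"
  unfolding Tm_def
  by (simp add: vec_eq_iff matrix_vector_mult_def sum_3 forall_3 algebra_simps)

lemma fold_Tm:
  "foldl (\<lambda>v s. Tm B d s *v v) (\<chi> i. if i = 1 then 1 - r else if i = 2 then r else 0) w
   = (\<chi> i. if i = 1 then 1 - encr B d r w else if i = 2 then encr B d r w else 0)"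
proof (induction w arbitrary: r)
  case Nil then show ?case unfolding encr_def foldl_Nil by (rule refl)
next
  case (Cons a w)
  have e: "encr B d r (a#w) = encr B d (B*r+d a) w" unfolding encr_def by simp
  show ?case by (simp only: foldl_Cons Tm_step Cons.IH e)
qed

definition encn :: "nat \<Rightarrow> ('a \<Rightarrow> nat) \<Rightarrow> nat \<Rightarrow> 'a list \<Rightarrow> nat" where
  "encn B d r w = foldl (\<lambda>n s. B * n + d s) r w"

lemma encr_encn: "encr (real B) (\<lambda>s. real (d s)) (real r) w = real (encn B d r w)"
proof (induction w arbitrary: r)
  case Nil then show ?case unfolding encr_def encn_def by simp
next
  case (Cons a w)
  show ?case using Cons[of "B*r + d a"] unfolding encr_def encn_def by simp
qed

lemma encn_snoc: "encn B d r (w @ [s]) = B * encn B d r w + d s"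
  unfolding encn_def by simp

lemma encn_inj:
  assumes "\<And>s. 0 < d s \<and> d s < B" and "inj d"
  shows "encn B d 0 w = encn B d 0 z \<Longrightarrow> w = z"
proof (induction w arbitrary: z rule: rev_induct)
  case Nil
  show ?case
  proof (cases z rule: rev_exhaust)
    case Nil then show ?thesis by simp
  next
    case (snoc ys y)
    with Nil.prems have "0 = B * encn B d 0 ys + d y" by (simp add: encn_snoc encn_def)
    with assms(1)[of y] show ?thesis by simp
  qed
next
  case (snoc x xs)
  note P = snoc.prems
  note IH = snoc.IH
  show ?case
  proof (cases z rule: rev_exhaust)
    case Nil
    with P have "B * encn B d 0 xs + d x = 0" by (simp add: encn_snoc encn_def)
    with assms(1)[of x] show ?thesis by simp
  next
    case (snoc ys y)
    with P have e: "B * encn B d 0 xs + d x = B * encn B d 0 ys + d y" by (simp add: encn_snoc)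
    have "(B * encn B d 0 xs + d x) mod B = d x" using assms(1)[of x] by simp
    moreover have "(B * encn B d 0 ys + d y) mod B = d y" using assms(1)[of y] by simp
    ultimately have xy: "d x = d y" using e by simp
    with e have "B * encn B d 0 xs = B * encn B d 0 ys" by simp
    moreover have "B > 0" using assms(1)[of x] by simp
    ultimately have "encn B d 0 xs = encn B d 0 ys" by simp
    then have "xs = ys" using IH by simp
    have "x = y" using xy assms(2) by (simp add: inj_eq)
    then show ?thesis using \<open>xs = ys\<close> snoc by simp
  qed
qed

definition Em :: "real \<Rightarrow> real \<Rightarrow> real^3^3" where
  "Em K X = (\<chi> i j. if j = 3 then (if i = 1 then 1 else 0) else if i = 1 then 1
     else if i = 2 then - K * ((if j = 2 then 1 else 0) - X) else K * ((if j = 2 then 1 else 0) - X))"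

lemma Em_apply:
  "Em K X *v (\<chi> i. if i = 1 then 1 - e else if i = 2 then e else 0)
   = (\<chi> i. if i = 1 then 1 else if i = 2 then - K * (e - X) else K * (e - X))"
  unfolding Em_def
  by (simp add: vec_eq_iff matrix_vector_mult_def sum_3 forall_3 algebra_simps)

lemma Em_cs: "col_stochastic (Em K X)"
  unfolding Em_def col_stochastic_def by (simp add: sum_3 forall_3)

lemma Tm_cs: "col_stochastic (Tm B d s)"
  unfolding Tm_def col_stochastic_def by (simp add: sum_3 forall_3)

theorem mainTheorem11:
  fixes x :: "'a::finite list" and \<epsilon> :: real
  assumes "\<epsilon> > 0"
  shows "\<exists>M :: ('a, 3) afa. is_afa M \<and> accept_prob M x = 1
           \<and> (\<forall>z. z \<noteq> x \<longrightarrow> accept_prob M z \<le> \<epsilon>)"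
proof -
  obtain f :: "'a \<Rightarrow> nat" and n where fn: "f ` UNIV = {i. i < n}" "inj f"
    using finite_imp_inj_to_nat_seg[of "UNIV :: 'a set"] by auto
  define dn where "dn s = f s + 1" for s
  define Bn where "Bn = n + 1"
  have dB: "\<And>s. 0 < dn s \<and> dn s < Bn" using fn(1) unfolding dn_def Bn_def by auto
  have dinj: "inj dn" using fn(2) unfolding dn_def inj_def by auto
  define K where "K = 1 / \<epsilon>"
  define X where "X = real (encn Bn dn 0 x)"
  define M :: "('a, 3) afa" where "M = \<lparr>trans = \<lambda>s. Tm (real Bn) (\<lambda>s. real (dn s)) s,
     endmark = Em K X, init = (\<chi> i. if i = 1 then 1 else 0), acc = {1}\<rparr>"
  have fv: "final_vec M w = (\<chi> i. if i = 1 then 1 else if i = 2 then - K * (real (encn Bn dn 0 w) - X)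
      else K * (real (encn Bn dn 0 w) - X))" for w
  proof -
    have i: "init M = (\<chi> i. if i = 1 then 1 - real 0 else if i = 2 then real 0 else 0)"
      unfolding M_def by (simp add: vec_eq_iff)
    show ?thesis unfolding final_vec_def i
      unfolding M_def afa.simps fold_Tm encr_encn by (simp add: Em_apply)
  qed
  have ap: "accept_prob M w = 1 / (1 + 2 * K * \<bar>real (encn Bn dn 0 w) - X\<bar>)" for w
  proof -
    have "K > 0" using assms K_def by simp
    then show ?thesis unfolding accept_prob_def fv
      by (simp add: sum_3 M_def abs_mult)
  qed
  show ?thesis
  proof (intro exI conjI allI impI)
    show "is_afa M" unfolding is_afa_def M_def by (simp add: Em_cs Tm_cs sum_3)
    show "accept_prob M x = 1" unfolding ap X_def by simp
    fix z assume "z \<noteq> x"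
    then have "encn Bn dn 0 z \<noteq> encn Bn dn 0 x" using encn_inj[OF dB dinj] by metis
    then have ge: "\<bar>real (encn Bn dn 0 z) - X\<bar> \<ge> 1" unfolding X_def by linarith
    have Kp: "K > 0" using assms K_def by simp
    have "1 + 2 * K \<le> 1 + 2 * K * \<bar>real (encn Bn dn 0 z) - X\<bar>"
      using ge Kp by simp
    then have "1 / (1 + 2 * K * \<bar>real (encn Bn dn 0 z) - X\<bar>) \<le> 1 / (1 + 2 * K)"
      using Kp ge by (intro divide_left_mono) (auto intro!: mult_pos_pos add_pos_nonneg)
    also have "\<dots> \<le> \<epsilon>" using assms unfolding K_def by (simp add: field_simps)
    finally show "accept_prob M z \<le> \<epsilon>" unfolding ap .
  qed
qed

end
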